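(* Let $G=(V,E)$ be a connected graph on $V=\{1,\dots,n\}$ with incidence matrix $B$ and Laplacian $L=BB^T$. For every $\Delta\in\mathbb{R}^{|E|}$ and all $i,j\in V$, $$\left|\Delta^TB^TL^\dagger(e_i-e_j)\right|\le\|\Delta\|_\infty\sqrt{\Omega_{ij}\,|E_{ij}|}.$$
   Context: Each edge of $G$ is given an arbitrary orientation; $B\in\mathbb{R}^{n\times|E|}$ has, in the column of edge $(a,b)$, $+1$ in row $a$, $-1$ in row $b$ and zeros elsewhere. $L^\dagger$ is the Moore–Penrose pseudoinverse of $L$. $\Omega_{ij}=(e_i-e_j)^TL^\dagger(e_i-e_j)$ is the effective resistance between $i$ and $j$ when every edge is a unit resistor. $E_{ij}$ is the set of edges lying on at least one simple path from $i$ to $j$. *)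

theory Defs
  imports "HOL-Analysis.Analysis"
begin

definition pinv :: "real^'n^'m \<Rightarrow> real^'m^'n" where
  "pinv A = (THE X. A ** X ** A = A \<and> X ** A ** X = X \<and>
                    transpose (A ** X) = A ** X \<and> transpose (X ** A) = X ** A)"

text \<open>A simple graph on the finite vertex type 'v, given by a set E of oriented
  edges (a,b): no loops, and each undirected edge is present with exactly one orientation.\<close>
definition simple_oriented_graph :: "('v \<times> 'v) set \<Rightarrow> bool" where
  "simple_oriented_graph E \<longleftrightarrow> (\<forall>(a,b)\<in>E. a \<noteq> b \<and> (b,a) \<notin> E)"

definition adj :: "('v \<times> 'v) set \<Rightarrow> 'v \<Rightarrow> 'v \<Rightarrow> bool" where
  "adj E u v \<longleftrightarrow> (u,v) \<in> E \<or> (v,u) \<in> E"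

definition connected_graph :: "('v \<times> 'v) set \<Rightarrow> bool" where
  "connected_graph E \<longleftrightarrow> (\<forall>u v. (u,v) \<in> {(x,y). adj E x y}\<^sup>*)"

definition incidence :: "('v \<times> 'v) set \<Rightarrow> 'v \<Rightarrow> ('v \<times> 'v) \<Rightarrow> real" where
  "incidence E v e = (if e \<in> E then (if v = fst e then 1 else if v = snd e then -1 else 0) else 0)"

definition laplacian :: "('v::finite \<times> 'v) set \<Rightarrow> real^'v^'v" where
  "laplacian E = (\<chi> u v. \<Sum>e\<in>E. incidence E u e * incidence E v e)"

definition simple_path :: "('v \<times> 'v) set \<Rightarrow> 'v \<Rightarrow> 'v \<Rightarrow> 'v list \<Rightarrow> bool" where
  "simple_path E i j p \<longleftrightarrow> p \<noteq> [] \<and> hd p = i \<and> last p = j \<and> distinct p \<and>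
     (\<forall>k. Suc k < length p \<longrightarrow> adj E (p ! k) (p ! Suc k))"

definition edge_on_path :: "('v \<times> 'v) \<Rightarrow> 'v list \<Rightarrow> bool" where
  "edge_on_path e p \<longleftrightarrow> (\<exists>k. Suc k < length p \<and>
     ((p ! k, p ! Suc k) = e \<or> (p ! Suc k, p ! k) = e))"

definition path_edges :: "('v \<times> 'v) set \<Rightarrow> 'v \<Rightarrow> 'v \<Rightarrow> ('v \<times> 'v) set" where
  "path_edges E i j = {e\<in>E. \<exists>p. simple_path E i j p \<and> edge_on_path e p}"

definition eff_res :: "('v::finite \<times> 'v) set \<Rightarrow> 'v \<Rightarrow> 'v \<Rightarrow> real" where
  "eff_res E i j = (axis i 1 - axis j 1) \<bullet> (pinv (laplacian E) *v (axis i 1 - axis j 1))"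

definition linf :: "('v \<times> 'v) set \<Rightarrow> (('v \<times> 'v) \<Rightarrow> real) \<Rightarrow> real" where
  "linf E \<Delta> = (if E = {} then 0 else Max ((\<lambda>e. \<bar>\<Delta> e\<bar>) ` E))"

end

theory Submission
  imports Defs
begin


lemma pinv_unique:
  fixes A :: "real^'n^'m"
  assumes a1: "A ** X ** A = A" and a2: "X ** A ** X = X" and a3: "transpose (A ** X) = A ** X"
      and a4: "transpose (X ** A) = X ** A"
      and b1: "A ** Y ** A = A" and b2: "Y ** A ** Y = Y" and b3: "transpose (A ** Y) = A ** Y"
      and b4: "transpose (Y ** A) = Y ** A"
  shows "X = Y"
proof -
  have tA1: "transpose A = transpose A ** (A ** Y)"
  proof -
    have "transpose A = transpose ((A ** Y) ** A)" using b1 by simp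
    also have "\<dots> = transpose A ** transpose (A ** Y)" by (rule matrix_transpose_mul)
    also have "\<dots> = transpose A ** (A ** Y)" by (simp only: b3)
    finally show ?thesis .
  qed
  have "X = X ** A ** X" by (simp only: a2)
  also have "\<dots> = X ** transpose (A ** X)" by (simp only: a3 matrix_mul_assoc)
  also have "\<dots> = X ** (transpose X ** transpose A)" by (simp only: matrix_transpose_mul)
  also have "\<dots> = X ** (transpose X ** (transpose A ** (A ** Y)))"
    by (rule arg_cong[where f="\<lambda>T. X ** (transpose X ** T)"], rule tA1)
  also have "\<dots> = X ** (transpose (A ** X) ** (A ** Y))" by (simp only: matrix_transpose_mul matrix_mul_assoc)
  also have "\<dots> = X ** ((A ** X) ** (A ** Y))" by (simp only: a3)
  also have "\<dots> = (X ** A ** X) ** (A ** Y)" by (simp only: matrix_mul_assoc)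
  also have "\<dots> = X ** (A ** Y)" by (simp only: a2)
  finally have X: "X = X ** A ** Y" by (simp only: matrix_mul_assoc)
  have tA2: "transpose A = (X ** A) ** transpose A"
  proof -
    have "transpose A = transpose (A ** (X ** A))" using a1 by (simp add: matrix_mul_assoc)
    also have "\<dots> = transpose (X ** A) ** transpose A" by (rule matrix_transpose_mul)
    also have "\<dots> = (X ** A) ** transpose A" by (simp only: a4)
    finally show ?thesis .
  qed
  have "Y = Y ** A ** Y" by (simp only: b2)
  also have "\<dots> = transpose (Y ** A) ** Y" by (simp only: b4)
  also have "\<dots> = (transpose A ** transpose Y) ** Y" by (simp only: matrix_transpose_mul)
  also have "\<dots> = (((X ** A) ** transpose A) ** transpose Y) ** Y"
    by (rule arg_cong[where f="\<lambda>T. (T ** transpose Y) ** Y"], rule tA2)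
  also have "\<dots> = (X ** A) ** transpose (Y ** A) ** Y" by (simp only: matrix_transpose_mul matrix_mul_assoc)
  also have "\<dots> = (X ** A) ** (Y ** A) ** Y" by (simp only: b4)
  also have "\<dots> = (X ** A) ** (Y ** A ** Y)" by (simp only: matrix_mul_assoc)
  also have "\<dots> = X ** A ** Y" by (simp only: b2)
  finally show ?thesis using X by simp
qed

lemma sym_inner:
  fixes A :: "real^'n^'n"
  assumes "transpose A = A"
  shows "(A *v x) \<bullet> y = x \<bullet> (A *v y)"
proof -
  have "(A *v x) \<bullet> y = (x v* A) \<bullet> y"
    using transpose_matrix_vector[of A x] assms by simp
  also have "\<dots> = x \<bullet> (A *v y)" by (rule dot_lmul_matrix)
  finally show ?thesis .
qed



lemma pinv_sym_exists:
  fixes A :: "real^'n^'n"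
  assumes sym: "transpose A = A"
  shows "\<exists>X. A ** X ** A = A \<and> X ** A ** X = X \<and>
                    transpose (A ** X) = A ** X \<and> transpose (X ** A) = X ** A"
proof -
  have sub: "subspace {y. A *v y = 0}"
    by (auto simp: subspace_def matrix_vector_right_distrib matrix_vector_mult_scaleR)
  obtain B where BK: "B \<subseteq> {y. A *v y = 0}" and orth: "pairwise orthogonal B"
     and nB: "\<And>x. x \<in> B \<Longrightarrow> norm x = 1" and indB: "independent B" and spB: "span B = {y. A *v y = 0}"
    using orthonormal_basis_subspace[OF sub] by metis
  have finB: "finite B" using indB independent_imp_finite by blast
  have bb: "b \<bullet> b = 1" if "b \<in> B" for b using nB[OF that] by (simp add: norm_eq_1)
  have bc: "b \<bullet> c = 0" if "b \<in> B" "c \<in> B" "b \<noteq> c" for b c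
    using orth that by (auto simp: pairwise_def orthogonal_def)
  define Q :: "real^'n^'n" where "Q = (\<chi> r c. \<Sum>b\<in>B. b$r * b$c)"
  have Qv: "Q *v y = (\<Sum>b\<in>B. (b \<bullet> y) *\<^sub>R b)" for y
    unfolding Q_def
    by (simp add: vec_eq_iff matrix_vector_mult_def inner_vec_def sum_distrib_left sum_distrib_right
          sum_component ac_simps) (subst sum.swap, simp add: sum_distrib_left ac_simps)
  have bQ: "b \<bullet> (Q *v y) = b \<bullet> y" if "b \<in> B" for b y
  proof -
    have "b \<bullet> (Q *v y) = (\<Sum>c\<in>B. (c \<bullet> y) * (b \<bullet> c))"
      by (simp add: Qv inner_sum_right)
    also have "\<dots> = (\<Sum>c\<in>B. if c = b then b \<bullet> y else 0)"
      by (rule sum.cong) (auto simp: bb bc that)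
    also have "\<dots> = b \<bullet> y" using finB that by simp
    finally show ?thesis .
  qed
  have QA: "Q *v (A *v y) = 0" for y
  proof -
    have "b \<bullet> (A *v y) = 0" if "b \<in> B" for b
      using sym_inner[OF sym, of b y] BK that by auto
    then show ?thesis by (simp add: Qv)
  qed
  have AQ: "A *v (Q *v y) = 0" for y
  proof -
    have "Q *v y \<in> span B" unfolding Qv
      by (intro span_sum span_mul span_base) 
    then show ?thesis using spB by auto
  qed
  have QQ: "Q *v (Q *v y) = Q *v y" for y
  proof -
    have "Q *v (Q *v y) = (\<Sum>b\<in>B. (b \<bullet> (Q *v y)) *\<^sub>R b)" by (rule Qv)
    also have "\<dots> = (\<Sum>b\<in>B. (b \<bullet> y) *\<^sub>R b)" by (rule sum.cong) (simp_all add: bQ)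
    finally show ?thesis by (simp add: Qv)
  qed
  have Qfix: "Q *v y = y" if "A *v y = 0" for y
  proof -
    have "y \<in> span B" using spB that by auto
    moreover have "Q *v y \<in> span B" unfolding Qv by (intro span_sum span_mul span_base)
    ultimately have "y - Q *v y \<in> span B" by (simp add: span_diff)
    moreover have "orthogonal (y - Q *v y) b" if "b \<in> B" for b
    proof -
      have "b \<bullet> (y - Q *v y) = 0" by (simp add: inner_diff_right bQ[OF that])
      then show ?thesis by (simp add: orthogonal_def inner_commute)
    qed
    ultimately have "orthogonal (y - Q *v y) (y - Q *v y)"
      using orthogonal_to_span by blast
    then show ?thesis by (simp add: orthogonal_def)
  qed
  have inj: "inj ((*v) (A + Q))"
  proof (rule injI)
    fix u v assume "(A + Q) *v u = (A + Q) *v v"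
    then have h: "A *v (u - v) + Q *v (u - v) = 0"
      by (simp add: matrix_vector_mult_add_rdistrib matrix_vector_mult_diff_distrib)
         (metis add_diff_add diff_self)
    then have "Q *v (A *v (u - v) + Q *v (u - v)) = 0" by simp
    then have q0: "Q *v (u - v) = 0" by (simp add: matrix_vector_right_distrib QA QQ)
    with h have "A *v (u - v) = 0" by simp
    then have "u - v = 0" using Qfix q0 by metis
    then show "u = v" by simp
  qed
  then obtain N where N1: "N ** (A + Q) = mat 1"
    using matrix_left_invertible_injective by blast
  then have N2: "(A + Q) ** N = mat 1" using matrix_left_right_inverse by blast
  have NAQ: "N *v (A *v y) + N *v (Q *v y) = y" for y
    using arg_cong[OF N1, of "\<lambda>M. M *v y"]
    by (simp add: matrix_vector_mul_assoc[symmetric] matrix_vector_mult_add_rdistrib matrix_vector_right_distrib)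
  have AQN: "A *v (N *v y) + Q *v (N *v y) = y" for y
    using arg_cong[OF N2, of "\<lambda>M. M *v y"]
    by (simp add: matrix_vector_mul_assoc[symmetric] matrix_vector_mult_add_rdistrib)
  have NQ: "N *v (Q *v y) = Q *v y" for y
    using NAQ[of "Q *v y"] by (simp add: AQ QQ)
  have QN: "Q *v (N *v y) = Q *v y" for y
  proof -
    have "Q *v y = Q *v (A *v (N *v y) + Q *v (N *v y))" using AQN[of y] by simp
    also have "\<dots> = Q *v (N *v y)" by (simp add: matrix_vector_right_distrib QA QQ)
    finally show ?thesis by simp
  qed
  define X where "X = N - Q"
  have AX: "A *v (X *v y) = y - Q *v y" for y
    using AQN[of y] by (simp add: X_def matrix_vector_mult_diff_rdistrib matrix_vector_mult_diff_distrib AQ QN eq_diff_eq)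
  have XA: "X *v (A *v y) = y - Q *v y" for y
    using NAQ[of y] by (simp add: X_def matrix_vector_mult_diff_rdistrib QA NQ eq_diff_eq)
  have QX: "Q *v (X *v y) = 0" for y
    by (simp add: X_def matrix_vector_mult_diff_rdistrib matrix_vector_mult_diff_distrib QN QQ)
  have XQ: "X *v (Q *v y) = 0" for y
    by (simp add: X_def matrix_vector_mult_diff_rdistrib NQ QQ)
  have M1: "A ** X = mat 1 - Q"
    by (simp add: matrix_eq matrix_vector_mul_assoc[symmetric] AX matrix_vector_mult_diff_rdistrib)
  have M2: "X ** A = mat 1 - Q"
    by (simp add: matrix_eq matrix_vector_mul_assoc[symmetric] XA matrix_vector_mult_diff_rdistrib)
  have tQ: "transpose Q = Q"
    by (simp add: Q_def transpose_def vec_eq_iff mult.commute)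
  have tM: "transpose (mat 1 - Q) = mat 1 - Q"
    using tQ by (simp add: transpose_def vec_eq_iff mat_def)
  have E1: "A ** X ** A = A"
    by (simp add: matrix_eq matrix_vector_mul_assoc[symmetric] AX QA)
  have E2: "X ** A ** X = X"
    by (simp add: matrix_eq matrix_vector_mul_assoc[symmetric] AX XQ matrix_vector_mult_diff_distrib)
  have T1: "transpose (A ** X) = A ** X" unfolding M1 by (rule tM)
  have T2: "transpose (X ** A) = X ** A" unfolding M2 by (rule tM)
  show ?thesis using E1 E2 T1 T2 by blast
qed



definition flow :: "('v::finite \<times> 'v) set \<Rightarrow> ('v \<Rightarrow> real) \<Rightarrow> ('v \<times> 'v) \<Rightarrow> real" where
  "flow E y e = (\<Sum>v\<in>UNIV. incidence E v e * y v)"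

definition lapy :: "('v::finite \<times> 'v) set \<Rightarrow> ('v \<Rightarrow> real) \<Rightarrow> 'v \<Rightarrow> real" where
  "lapy E y u = (\<Sum>e\<in>E. incidence E u e * flow E y e)"

lemma flow_edge:
  assumes "simple_oriented_graph E" "(a,b) \<in> E"
  shows "flow E y (a,b) = y a - y b"
proof -
  have ab: "a \<noteq> b" using assms by (auto simp: simple_oriented_graph_def)
  have "flow E y (a,b) = (\<Sum>v\<in>UNIV. (if v = a then y a else 0) + (if v = b then - y b else 0))"
    unfolding flow_def by (rule sum.cong) (use ab assms(2) in \<open>auto simp: incidence_def\<close>)
  also have "\<dots> = y a - y b" by (simp add: sum.distrib)
  finally show ?thesis .
qed

lemma flow_neg: "flow E (\<lambda>v. - y v) e = - flow E y e"
  by (simp add: flow_def sum_negf)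

lemma lapy_neg: "lapy E (\<lambda>v. - y v) u = - lapy E y u"
  by (simp add: lapy_def flow_neg sum_negf)

lemma adj_sym: "adj E u w \<Longrightarrow> adj E w u" by (auto simp: adj_def)

lemma lower_exists:
  fixes E :: "('v::finite \<times> 'v) set"
  assumes sg: "simple_oriented_graph E"
    and H: "0 \<le> lapy E y u" and G: "0 < lapy E y u \<or> (\<exists>w. adj E u w \<and> y w > y u)"
  shows "\<exists>w. adj E u w \<and> y w < y u"
proof -
  let ?g = "\<lambda>e. incidence E u e * flow E y e"
  have fin: "finite E" by simp
  have "\<exists>e\<in>E. ?g e > 0"
  proof (rule ccontr)
    assume "\<not> ?thesis"
    then have le: "\<forall>e\<in>E. ?g e \<le> 0" by auto
    have "lapy E y u < 0"
    proof (cases "0 < lapy E y u")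
      case True
      then show ?thesis using le sum_nonpos[of E ?g] by (simp add: lapy_def)
    next
      case False
      then obtain w where w: "adj E u w" "y w > y u" using G by auto
      have "\<exists>e\<in>E. ?g e < 0"
      proof (cases "(u,w) \<in> E")
        case True
        then show ?thesis using flow_edge[OF sg True, of y] w
          by (intro bexI[of _ "(u,w)"]) (auto simp: incidence_def)
      next
        case False
        then have wu: "(w,u) \<in> E" using w by (auto simp: adj_def)
        then have "w \<noteq> u" using sg by (auto simp: simple_oriented_graph_def)
        then show ?thesis using flow_edge[OF sg wu, of y] w wu
          by (intro bexI[of _ "(w,u)"]) (auto simp: incidence_def)
      qed
      then obtain e0 where e0: "e0 \<in> E" "?g e0 < 0" by blast
      have "lapy E y u = ?g e0 + (\<Sum>e\<in>E - {e0}. ?g e)"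
        unfolding lapy_def using e0(1) fin by (simp add: sum.remove)
      moreover have "(\<Sum>e\<in>E - {e0}. ?g e) \<le> 0" using le by (intro sum_nonpos) auto
      ultimately show ?thesis using e0 by simp
    qed
    then show False using H by simp
  qed
  then obtain a b where ab: "(a,b) \<in> E" "?g (a,b) > 0" by auto
  have anb: "a \<noteq> b" using sg ab by (auto simp: simple_oriented_graph_def)
  show ?thesis
  proof (cases "u = a")
    case True
    have inc: "incidence E a (a,b) = 1" using ab(1) by (simp add: incidence_def)
    have "y b < y u" using ab(2) True inc flow_edge[OF sg ab(1), of y] by simp
    moreover have "adj E u b" using ab(1) True by (simp add: adj_def)
    ultimately show ?thesis by blast
  next
    case False
    then have ub: "u = b" using ab(2) by (auto simp: incidence_def split: if_splits)
    have inc: "incidence E b (a,b) = -1" using ab(1) anb by (simp add: incidence_def)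
    have "y a < y u" using ab(2) ub inc flow_edge[OF sg ab(1), of y] by simp
    moreover have "adj E u a" using ab(1) ub by (simp add: adj_def)
    ultimately show ?thesis by blast
  qed
qed

lemma down_path:
  fixes E :: "('v::finite \<times> 'v) set"
  assumes sg: "simple_oriented_graph E"
    and H1: "\<And>u. u \<noteq> t \<Longrightarrow> 0 \<le> lapy E y u" and H2: "s \<noteq> t \<Longrightarrow> 0 < lapy E y s"
  shows "u = s \<or> (\<exists>w. adj E u w \<and> y w > y u) \<Longrightarrow>
    \<exists>p. p \<noteq> [] \<and> hd p = u \<and> last p = t \<and> successively (\<lambda>a b. adj E a b \<and> y a > y b) p"
proof (induction "card {w. y w < y u}" arbitrary: u rule: less_induct)
  case less
  show ?case
  proof (cases "u = t")
    case True
    then show ?thesis by (intro exI[of _ "[t]"]) auto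
  next
    case False
    have G: "0 < lapy E y u \<or> (\<exists>w. adj E u w \<and> y w > y u)"
      using less.prems H2 False by auto
    obtain w where w: "adj E u w" "y w < y u"
      using lower_exists[OF sg H1[OF False] G] by blast
    have "{v. y v < y w} \<subset> {v. y v < y u}" using w by auto
    then have c1: "card {v. y v < y w} < card {v. y v < y u}" by (simp add: psubset_card_mono)
    have c2: "w = s \<or> (\<exists>w'. adj E w w' \<and> y w' > y w)"
      by (intro disjI2 exI[of _ u]) (simp add: adj_sym w)
    from less.hyps[OF c1 c2] obtain p where p: "p \<noteq> []" "hd p = w" "last p = t"
        "successively (\<lambda>a b. adj E a b \<and> y a > y b) p"
      by blast
    show ?thesis using p w
      by (intro exI[of _ "u # p"]) (auto simp: successively_Cons)
  qed
qed

lemma sorted_distinct: "sorted_wrt (\<lambda>a b. (y::'v \<Rightarrow> real) a > y b) p \<Longrightarrow> distinct p"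
  by (induction p) auto

lemma edge_path:
  fixes E :: "('v::finite \<times> 'v) set"
  assumes sg: "simple_oriented_graph E"
    and H1: "\<And>u. u \<noteq> t \<Longrightarrow> 0 \<le> lapy E y u" and H2: "s \<noteq> t \<Longrightarrow> 0 < lapy E y s"
    and H3: "\<And>u. u \<noteq> s \<Longrightarrow> lapy E y u \<le> 0" and H4: "s \<noteq> t \<Longrightarrow> lapy E y t < 0"
    and uw: "adj E u w" "y u > y w"
  shows "\<exists>P. simple_path E s t P \<and> (\<exists>k. Suc k < length P \<and> P ! k = u \<and> P ! Suc k = w)"
proof -
  have cw: "w = s \<or> (\<exists>w'. adj E w w' \<and> y w' > y w)"
    by (intro disjI2 exI[of _ u]) (simp add: adj_sym uw)
  from down_path[OF sg H1 H2 cw] obtain p where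
    p: "p \<noteq> []" "hd p = w" "last p = t" "successively (\<lambda>a b. adj E a b \<and> y a > y b) p"
    by blast
  have H1': "0 \<le> lapy E (\<lambda>v. - y v) v" if "v \<noteq> s" for v using H3[OF that] by (simp add: lapy_neg)
  have H2': "0 < lapy E (\<lambda>v. - y v) t" if "t \<noteq> s" using H4 that by (simp add: lapy_neg)
  have cu: "u = t \<or> (\<exists>w'. adj E u w' \<and> - y w' > - y u)"
    by (intro disjI2 exI[of _ w]) (simp add: uw)
  from down_path[where y="\<lambda>v. - y v" and s=t and t=s and u=u, OF sg H1' H2' cu] obtain q0 where q0: "q0 \<noteq> []" "hd q0 = u" "last q0 = s"
      "successively (\<lambda>a b. adj E a b \<and> - y a > - y b) q0"
    by blast
  define q where "q = rev q0"
  have "successively (\<lambda>a b. adj E b a \<and> y b > y a) q0"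
    using q0(4) by (rule successively_mono) (auto intro: adj_sym)
  then have q4: "successively (\<lambda>a b. adj E a b \<and> y a > y b) q" unfolding q_def by simp
  have q: "q \<noteq> []" "last q = u" "hd q = s" "successively (\<lambda>a b. adj E a b \<and> y a > y b) q"
    using q0(1-3) q4 by (simp_all add: q_def hd_rev last_rev)
  define P where "P = q @ p"
  have sP: "successively (\<lambda>a b. adj E a b \<and> y a > y b) P"
    unfolding P_def using p q uw by (simp add: successively_append_iff)
  have "successively (\<lambda>a b. y a > y b) P" using sP by (rule successively_mono) auto
  then have "sorted_wrt (\<lambda>a b. y a > y b) P"
    by (subst successively_conv_sorted_wrt[symmetric]) (auto simp: transp_def)
  then have dP: "distinct P" by (rule sorted_distinct)
  have spath: "simple_path E s t P"
    unfolding simple_path_def using p q dP sP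
    by (auto simp: P_def successively_conv_nth)
  have "Suc (length q - 1) < length P" "P ! (length q - 1) = u" "P ! Suc (length q - 1) = w"
    using p q by (auto simp: P_def nth_append last_conv_nth hd_conv_nth)
  then show ?thesis using spath by blast
qed

lemma pinv_sym_all:
  fixes A :: "real^'n^'n"
  assumes "transpose A = A"
  shows "A ** pinv A ** A = A \<and> pinv A ** A ** pinv A = pinv A \<and>
                    transpose (A ** pinv A) = A ** pinv A \<and> transpose (pinv A ** A) = pinv A ** A"
proof -
  let ?P = "\<lambda>X. A ** X ** A = A \<and> X ** A ** X = X \<and>
                    transpose (A ** X) = A ** X \<and> transpose (X ** A) = X ** A"
  have ex: "\<exists>X. ?P X" by (rule pinv_sym_exists[OF assms])
  have ex1: "\<exists>!X. ?P X"
  proof (rule ex_ex1I[OF ex])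
    fix X Y assume PX: "?P X" and PY: "?P Y"
    have x: "A ** X ** A = A" "X ** A ** X = X" "transpose (A ** X) = A ** X" "transpose (X ** A) = X ** A"
      using PX by auto
    have y: "A ** Y ** A = A" "Y ** A ** Y = Y" "transpose (A ** Y) = A ** Y" "transpose (Y ** A) = Y ** A"
      using PY by auto
    show "X = Y" by (rule pinv_unique[OF x y])
  qed
  have "?P (THE X. ?P X)" using theI'[OF ex1] .
  then show ?thesis unfolding pinv_def .
qed

lemma pinv_sym:
  fixes A :: "real^'n^'n"
  assumes "transpose A = A"
  shows "A ** pinv A ** A = A"
  using pinv_sym_all[OF assms] by blast

lemma pinv_sym2:
  fixes A :: "real^'n^'n"
  assumes "transpose A = A"
  shows "transpose (A ** pinv A) = A ** pinv A"
  using pinv_sym_all[OF assms] by blast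

lemma lap_comp: "(laplacian E *v x) $ u = lapy E (($) x) u"
  unfolding laplacian_def lapy_def flow_def matrix_vector_mult_def
  by (simp add: sum_distrib_left sum_distrib_right mult.assoc) (rule sum.swap)

lemma lap_sym: "transpose (laplacian E) = laplacian E"
  by (simp add: laplacian_def transpose_def vec_eq_iff mult.commute)

lemma quad: "x \<bullet> (laplacian E *v x) = (\<Sum>e\<in>E. (flow E (($) x) e)^2)"
proof -
  have "x \<bullet> (laplacian E *v x) = (\<Sum>u\<in>UNIV. x $ u * (\<Sum>e\<in>E. incidence E u e * flow E (($) x) e))"
    by (simp add: inner_vec_def lap_comp lapy_def)
  also have "\<dots> = (\<Sum>e\<in>E. flow E (($) x) e * (\<Sum>u\<in>UNIV. incidence E u e * x $ u))"
    by (simp add: sum_distrib_left sum_distrib_right ac_simps) (rule sum.swap)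
  also have "\<dots> = (\<Sum>e\<in>E. (flow E (($) x) e)^2)"
    by (simp add: flow_def power2_eq_square)
  finally show ?thesis .
qed

lemma conn_const:
  fixes E :: "('v::finite \<times> 'v) set"
  assumes sg: "simple_oriented_graph E" and cg: "connected_graph E"
    and z: "\<And>e. e \<in> E \<Longrightarrow> flow E z e = 0"
  shows "z u = z v"
proof -
  have "(u,v) \<in> {(x,y). adj E x y}\<^sup>*" using cg by (simp add: connected_graph_def)
  then show ?thesis
  proof (induction rule: rtrancl_induct)
    case base then show ?case by simp
  next
    case (step b c)
    have "z b = z c"
    proof (cases "(b,c) \<in> E")
      case True then show ?thesis using z[OF True] flow_edge[OF sg True] by simp
    next
      case False
      then have "(c,b) \<in> E" using step by (auto simp: adj_def)
      then show ?thesis using z flow_edge[OF sg] by force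
    qed
    then show ?case using step by simp
  qed
qed

theorem lemma4:
  fixes E :: "('v::finite \<times> 'v) set" and \<Delta> :: "('v \<times> 'v) \<Rightarrow> real" and i j :: 'v
  assumes "simple_oriented_graph E" and "connected_graph E"
  shows "\<bar>\<Sum>e\<in>E. \<Delta> e * (\<Sum>v\<in>UNIV. incidence E v e *
            (pinv (laplacian E) *v (axis i 1 - axis j 1)) $ v)\<bar>
         \<le> linf E \<Delta> * sqrt (eff_res E i j * real (card (path_edges E i j)))"
proof -
  note sg = assms(1) and cg = assms(2)
  define L where "L = laplacian E"
  define M where "M = pinv L"
  define d :: "real^'v" where "d = axis i 1 - axis j 1"
  define x where "x = M *v d"
  define f where "f = flow E (($) x)"
  have lhs: "(\<Sum>e\<in>E. \<Delta> e * (\<Sum>v\<in>UNIV. incidence E v e *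
            (pinv (laplacian E) *v (axis i 1 - axis j 1)) $ v)) = (\<Sum>e\<in>E. \<Delta> e * f e)"
    unfolding f_def flow_def x_def M_def L_def d_def by (rule refl)
  have linfge: "\<bar>\<Delta> e\<bar> \<le> linf E \<Delta>" if "e \<in> E" for e
  proof -
    have "E \<noteq> {}" using that by auto
    then have "linf E \<Delta> = Max ((\<lambda>e. \<bar>\<Delta> e\<bar>) ` E)" by (simp add: linf_def)
    moreover have "\<bar>\<Delta> e\<bar> \<le> Max ((\<lambda>e. \<bar>\<Delta> e\<bar>) ` E)"
      by (rule Max_ge) (use that in auto)
    ultimately show ?thesis by simp
  qed
  have linf0: "0 \<le> linf E \<Delta>"
  proof (cases "E = {}")
    case False
    then obtain e where "e \<in> E" by auto
    then show ?thesis using linfge[of e] abs_ge_zero[of "\<Delta> e"] by linarith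
  qed (simp add: linf_def)
  show ?thesis
  proof (cases "i = j")
    case True
    then have "x = 0" by (simp add: x_def d_def)
    then have "f = (\<lambda>e. 0)" by (simp add: f_def flow_def fun_eq_iff)
    moreover have "eff_res E i j = 0" using True by (simp add: eff_res_def)
    ultimately show ?thesis unfolding lhs using linf0 by simp
  next
    case ij: False
    have symL: "transpose L = L" by (simp add: L_def lap_sym)
    have LML: "L ** M ** L = L" using pinv_sym[OF symL] by (simp add: M_def)
    define z where "z = d - L *v x"
    have LMsym: "transpose (L ** M) = L ** M" using pinv_sym2[OF symL] by (simp add: M_def)
    have zL: "z \<bullet> (L *v u) = 0" for u
    proof -
      have Lx': "L *v x = (L ** M) *v d" unfolding x_def by (rule matrix_vector_mul_assoc)
      have "(L *v x) \<bullet> (L *v u) = d \<bullet> ((L ** M) *v (L *v u))"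
        unfolding Lx' by (rule sym_inner[OF LMsym])
      also have "(L ** M) *v (L *v u) = L *v u"
        using matrix_vector_mul_assoc[of "L ** M" L u] LML by simp
      finally have "(L *v x) \<bullet> (L *v u) = d \<bullet> (L *v u)" .
      then show ?thesis unfolding z_def by (simp add: inner_diff_left)
    qed
    have Lz: "L *v z = 0"
    proof -
      have "(L *v z) \<bullet> (L *v z) = z \<bullet> (L *v (L *v z))" by (rule sym_inner[OF symL])
      also have "\<dots> = 0" by (rule zL)
      finally show ?thesis by simp
    qed
    have "(\<Sum>e\<in>E. (flow E (($) z) e)^2) = 0" using quad[of z E] Lz by (simp add: L_def)
    then have "\<forall>e\<in>E. (flow E (($) z) e)^2 = 0"
      by (subst sum_nonneg_eq_0_iff[symmetric]) auto
    then have zc: "z $ u = z $ v" for u v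
      using conn_const[OF sg cg, of "($) z"] by simp
    have "z \<bullet> z = z \<bullet> d - z \<bullet> (L *v x)" by (simp add: z_def inner_diff_right)
    also have "z \<bullet> (L *v x) = 0" using sym_inner[OF symL, of z x] Lz by simp
    also have "z \<bullet> d = z $ i - z $ j" by (simp add: d_def inner_diff_right inner_axis)
    finally have "z \<bullet> z = 0" using zc[of i j] by simp
    then have Lx: "L *v x = d" by (simp add: z_def)
    have effr: "eff_res E i j = (\<Sum>e\<in>E. (f e)^2)"
    proof -
      have "eff_res E i j = d \<bullet> x" by (simp add: eff_res_def x_def M_def L_def d_def)
      also have "\<dots> = x \<bullet> (L *v x)" by (simp add: Lx inner_commute)
      finally show ?thesis by (simp add: quad f_def L_def)
    qed
    have lapd: "lapy E (($) x) u = (if u = i then 1 else 0) - (if u = j then 1 else 0)" for u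
      using arg_cong[OF Lx, of "\<lambda>v. v $ u"] by (simp add: lap_comp L_def d_def axis_def)
    have inPE: "e \<in> path_edges E i j" if e: "e \<in> E" "f e \<noteq> 0" for e
    proof -
      obtain a b where ab: "e = (a,b)" by (cases e)
      have fe: "f e = x $ a - x $ b" using flow_edge[OF sg, of a b] e ab by (simp add: f_def)
      have H1: "0 \<le> lapy E (($) x) u" if "u \<noteq> j" for u using that lapd[of u] by simp
      have H2: "0 < lapy E (($) x) i" using lapd[of i] ij by simp
      have H3: "lapy E (($) x) u \<le> 0" if "u \<noteq> i" for u using that lapd[of u] by simp
      have H4: "lapy E (($) x) j < 0" using lapd[of j] ij by simp
      have adjab: "adj E a b" "adj E b a" using e ab by (auto simp: adj_def)
      show ?thesis
      proof (cases "x $ a > x $ b")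
        case True
        obtain P k where P: "simple_path E i j P" "Suc k < length P" "P ! k = a" "P ! Suc k = b"
          using edge_path[OF sg H1 H2 H3 H4 adjab(1)] True by blast
        have "edge_on_path e P" unfolding edge_on_path_def using P(2-4) ab by auto
        then show ?thesis using e(1) P(1) unfolding path_edges_def by blast
      next
        case False
        then have "x $ b > x $ a" using e fe by auto
        then obtain P k where P: "simple_path E i j P" "Suc k < length P" "P ! k = b" "P ! Suc k = a"
          using edge_path[OF sg H1 H2 H3 H4 adjab(2)] by blast
        have "edge_on_path e P" unfolding edge_on_path_def using P(2-4) ab by auto
        then show ?thesis using e(1) P(1) unfolding path_edges_def by blast
      qed
    qed
    define F where "F = {e\<in>E. f e \<noteq> 0}"
    define PE where "PE = path_edges E i j"
    have finE: "finite E" by simp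
    have FPE: "F \<subseteq> PE" using inPE by (auto simp: F_def PE_def)
    have finPE: "finite PE" by (simp add: PE_def path_edges_def)
    have s1: "(\<Sum>e\<in>E. \<Delta> e * f e) = (\<Sum>e\<in>F. \<Delta> e * f e)"
      by (rule sum.mono_neutral_right) (auto simp: F_def)
    have "\<bar>\<Sum>e\<in>F. \<Delta> e * f e\<bar> \<le> (\<Sum>e\<in>F. \<bar>\<Delta> e\<bar> * \<bar>f e\<bar>)"
      by (rule order_trans[OF sum_abs]) (simp add: abs_mult)
    also have "\<dots> \<le> (\<Sum>e\<in>F. linf E \<Delta> * \<bar>f e\<bar>)"
      by (rule sum_mono) (auto simp: F_def intro!: mult_right_mono linfge)
    also have "\<dots> = linf E \<Delta> * (\<Sum>e\<in>F. \<bar>(\<lambda>_. 1::real) e\<bar> * \<bar>f e\<bar>)"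
      by (simp add: sum_distrib_left)
    also have "\<dots> \<le> linf E \<Delta> * (L2_set (\<lambda>_. 1::real) F * L2_set f F)"
      by (intro mult_left_mono L2_set_mult_ineq linf0)
    finally have c1: "\<bar>\<Sum>e\<in>F. \<Delta> e * f e\<bar> \<le> linf E \<Delta> * (L2_set (\<lambda>_. 1::real) F * L2_set f F)" .
    have c2: "L2_set (\<lambda>_. 1::real) F * L2_set f F \<le> sqrt (real (card PE)) * sqrt (eff_res E i j)"
    proof (intro mult_mono)
      show "L2_set (\<lambda>_. 1::real) F \<le> sqrt (real (card PE))"
        using card_mono[OF finPE FPE] by (simp add: L2_set_constant)
      show "L2_set f F \<le> sqrt (eff_res E i j)"
        unfolding L2_set_def effr
        by (intro real_sqrt_le_mono sum_mono2) (auto simp: F_def)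
    qed auto
    have c3: "sqrt (real (card PE)) * sqrt (eff_res E i j) = sqrt (eff_res E i j * real (card PE))"
      by (simp add: real_sqrt_mult mult.commute)
    have "\<bar>\<Sum>e\<in>F. \<Delta> e * f e\<bar> \<le> linf E \<Delta> * sqrt (eff_res E i j * real (card PE))"
      using order_trans[OF c1 mult_left_mono[OF c2 linf0]] unfolding c3 .
    then show ?thesis unfolding lhs s1 PE_def .
  qed
qed

end
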